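(* Let $\mathcal{P}=\{P_1,\ldots,P_n\}$ and let $\mathcal{F}\subseteq 2^{\mathcal{P}}$ be a fail-prone system. Consider the ideal $I=\langle \xi_{\mathcal{F}_{\bar X}},\ \xi_{\mathcal{F}_{\bar Y}},\ \xi_{\mathcal{F}_{\bar T}},\ \omega\rangle\subseteq\mathbb{B}(\bar X,\bar Y,\bar T)$ and let $\mathcal{G}$ be a Gröbner basis for $I$. If $|SM(\mathcal{G})|=|\varphi(\mathcal{F})|^3$, then $\mathcal{F}$ satisfies the $Q^3$-condition, i.e. $\mathcal{P}\not\subseteq F_1\cup F_2\cup F_3$ for all $F_1,F_2,F_3\in\mathcal{F}$.
   Context: $\mathbb{B}=\mathbb{F}_2$; $\mathbb{B}(\bar X,\bar Y,\bar T)$ is the Boolean polynomial ring $\mathbb{B}[X_1,\ldots,X_n,Y_1,\ldots,Y_n,T_1,\ldots,T_n]$ modulo $\langle X_i^2-X_i,Y_i^2-Y_i,T_i^2-T_i\rangle$. $\varphi:2^{\mathcal{P}}\to\mathbb{B}^n$ sends a set to its indicator vector, $\varphi(\mathcal{F})=\{\varphi(F):F\in\mathcal{F}\}$. For $S\subseteq\mathcal{P}$, $\xi_S(\bar Z)=\prod_{i=1}^n(1+Z_i+\varphi(S)_i)$; for $\mathcal{A}\subseteq 2^{\mathcal{P}}$, $\xi_{\mathcal{A}_{\bar Z}}=\prod_{A\in\mathcal{A}}(\xi_A(\bar Z)+1)$. $\omega(\bar X,\bar Y,\bar T)=\prod_{i=1}^n(X_iY_iT_i+X_iY_i+X_iT_i+Y_iT_i+X_i+Y_i+T_i)$.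 A fail-prone system is a collection of subsets of $\mathcal{P}$ none of which is contained in another. Monomial order: lexicographic with block order $\bar T<\bar Y<\bar X$ and within blocks $X_n\prec\cdots\prec X_1$ etc. A Gröbner basis of $I$ is a generating set $\mathcal{G}$ such that every nonzero $f\in I$ has leading monomial divisible by that of some $g\in\mathcal{G}$; $SM(\mathcal{G})$ is the set of multilinear monomials not in the ideal generated by the leading monomials of elements of $I$. *)

theory Defs
  imports Main
begin

datatype var = X nat | Y nat | T nat

(* Multilinear monomials = finite sets of variables; elements of the Boolean
   polynomial ring B(X,Y,T) = F2[X,Y,T]/<Z^2 - Z> are represented by their unique
   multilinear normal form, i.e. the finite set of monomials with coefficient 1. *)
type_synonym mono = "var set"
type_synonym bpoly = "mono set"

definition vars :: "nat \<Rightarrow> var set" where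
  "vars n = X ` {1..n} \<union> Y ` {1..n} \<union> T ` {1..n}"

definition mmonos :: "nat \<Rightarrow> mono set" where
  "mmonos n = Pow (vars n)"

definition bring :: "nat \<Rightarrow> bpoly set" where
  "bring n = {p. finite p \<and> p \<subseteq> mmonos n}"

definition bzero :: bpoly where "bzero = {}"
definition bone :: bpoly where "bone = {{}}"
definition bconst :: "bool \<Rightarrow> bpoly" where "bconst b = (if b then bone else bzero)"
definition bvar :: "var \<Rightarrow> bpoly" where "bvar v = {{v}}"

definition badd :: "bpoly \<Rightarrow> bpoly \<Rightarrow> bpoly" where
  "badd p q = (p - q) \<union> (q - p)"

(* multiplication, using Z_i^2 = Z_i (monomial product = union) and coefficients mod 2 *)
definition bmult :: "bpoly \<Rightarrow> bpoly \<Rightarrow> bpoly" where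
  "bmult p q = {m. odd (card {(a, b). a \<in> p \<and> b \<in> q \<and> a \<union> b = m})}"

definition bprod_idx :: "nat \<Rightarrow> (nat \<Rightarrow> bpoly) \<Rightarrow> bpoly" where
  "bprod_idx n f = foldr (\<lambda>i acc. bmult (f i) acc) [1..<Suc n] bone"

(* product over a finite set (the ring is commutative) *)
definition bprod_set :: "('a \<Rightarrow> bpoly) \<Rightarrow> 'a set \<Rightarrow> bpoly" where
  "bprod_set f A = Finite_Set.fold (\<lambda>a acc. bmult (f a) acc) bone A"

inductive_set ideal_gen :: "nat \<Rightarrow> bpoly set \<Rightarrow> bpoly set" for n S where
  zero: "bzero \<in> ideal_gen n S"
| gen: "s \<in> S \<Longrightarrow> s \<in> ideal_gen n S"
| add: "a \<in> ideal_gen n S \<Longrightarrow> b \<in> ideal_gen n S \<Longrightarrow> badd a b \<in> ideal_gen n S"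
| mult: "r \<in> bring n \<Longrightarrow> a \<in> ideal_gen n S \<Longrightarrow> bmult r a \<in> ideal_gen n S"

(* P = {P_1..P_n} is identified with {1..n}; phi sends a set to its indicator vector *)
definition phi :: "nat \<Rightarrow> nat set \<Rightarrow> bool list" where
  "phi n S = map (\<lambda>i. i \<in> S) [1..<Suc n]"

definition fail_prone :: "nat \<Rightarrow> nat set set \<Rightarrow> bool" where
  "fail_prone n F \<longleftrightarrow> F \<subseteq> Pow {1..n} \<and> (\<forall>A\<in>F. \<forall>B\<in>F. A \<subseteq> B \<longrightarrow> A = B)"

(* xi_S(Z) = prod_{i=1}^n (1 + Z_i + phi(S)_i); Z selects the block X, Y or T *)
definition xi :: "nat \<Rightarrow> (nat \<Rightarrow> var) \<Rightarrow> nat set \<Rightarrow> bpoly" where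
  "xi n Z S = bprod_idx n (\<lambda>i. badd (badd bone (bvar (Z i))) (bconst (phi n S ! (i - 1))))"

definition xi_fam :: "nat \<Rightarrow> (nat \<Rightarrow> var) \<Rightarrow> nat set set \<Rightarrow> bpoly" where
  "xi_fam n Z A = bprod_set (\<lambda>S. badd (xi n Z S) bone) A"

definition omega :: "nat \<Rightarrow> bpoly" where
  "omega n = bprod_idx n (\<lambda>i.
     let x = bvar (X i); y = bvar (Y i); t = bvar (T i) in
     badd (bmult (bmult x y) t) (badd (bmult x y) (badd (bmult x t) (badd (bmult y t)
       (badd x (badd y t))))))"

definition ideal_I :: "nat \<Rightarrow> nat set set \<Rightarrow> bpoly set" where
  "ideal_I n F = ideal_gen n {xi_fam n X F, xi_fam n Y F, xi_fam n T F, omega n}"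

(* monomial order: lex, T < Y < X, within blocks X_n < ... < X_1.
   rank: smaller rank = larger variable *)
fun rank :: "nat \<Rightarrow> var \<Rightarrow> nat" where
  "rank n (X i) = i"
| "rank n (Y i) = n + i"
| "rank n (T i) = 2 * n + i"

definition mono_less :: "nat \<Rightarrow> mono \<Rightarrow> mono \<Rightarrow> bool" where
  "mono_less n a b \<longleftrightarrow>
     (\<exists>v\<in>b - a. \<forall>w\<in>vars n. rank n w < rank n v \<longrightarrow> (w \<in> a \<longleftrightarrow> w \<in> b))"

definition lm :: "nat \<Rightarrow> bpoly \<Rightarrow> mono" where
  "lm n p = (THE m. m \<in> p \<and> (\<forall>m'\<in>p. m' \<noteq> m \<longrightarrow> mono_less n m' m))"

definition groebner_basis :: "nat \<Rightarrow> bpoly set \<Rightarrow> bpoly set \<Rightarrow> bool" where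
  "groebner_basis n I G \<longleftrightarrow> G \<subseteq> bring n \<and> ideal_gen n G = I \<and>
     (\<forall>f\<in>I. f \<noteq> bzero \<longrightarrow> (\<exists>g\<in>G. g \<noteq> bzero \<and> lm n g \<subseteq> lm n f))"

definition SM :: "nat \<Rightarrow> bpoly set \<Rightarrow> mono set" where
  "SM n I = {m \<in> mmonos n. {m} \<notin> ideal_gen n {{lm n f} | f. f \<in> I \<and> f \<noteq> bzero}}"

definition Q3 :: "nat \<Rightarrow> nat set set \<Rightarrow> bool" where
  "Q3 n F \<longleftrightarrow> (\<forall>F1\<in>F. \<forall>F2\<in>F. \<forall>F3\<in>F. \<not> {1..n} \<subseteq> F1 \<union> F2 \<union> F3)"

end

theory Submission
  imports Defs
begin


definition ev :: "bpoly \<Rightarrow> var set \<Rightarrow> bool" where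
  "ev p a = odd (card {m\<in>p. m \<subseteq> a})"

lemma ev_badd: assumes "finite p" "finite q" shows "ev (badd p q) a = (ev p a \<noteq> ev q a)"
proof -
  let ?P = "{m\<in>p. m \<subseteq> a}" let ?Q = "{m\<in>q. m \<subseteq> a}"
  have e: "{m \<in> badd p q. m \<subseteq> a} = (?P - ?Q) \<union> (?Q - ?P)" unfolding badd_def by auto
  have f: "finite ?P" "finite ?Q" using assms by auto
  have c1: "card ((?P - ?Q) \<union> (?Q - ?P)) = card (?P - ?Q) + card (?Q - ?P)"
    by (rule card_Un_disjoint) (use f in auto)
  have c2: "card ?P = card (?P - ?Q) + card (?P \<inter> ?Q)"
  proof -
    have "card ((?P - ?Q) \<union> (?P \<inter> ?Q)) = card (?P - ?Q) + card (?P \<inter> ?Q)"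
      by (rule card_Un_disjoint) (use f in auto)
    moreover have "(?P - ?Q) \<union> (?P \<inter> ?Q) = ?P" by auto
    ultimately show ?thesis by simp
  qed
  have c3: "card ?Q = card (?Q - ?P) + card (?P \<inter> ?Q)"
  proof -
    have "card ((?Q - ?P) \<union> (?P \<inter> ?Q)) = card (?Q - ?P) + card (?P \<inter> ?Q)"
      by (rule card_Un_disjoint) (use f in auto)
    moreover have "(?Q - ?P) \<union> (?P \<inter> ?Q) = ?Q" by auto
    ultimately show ?thesis by simp
  qed
  show ?thesis unfolding ev_def e c1 using c2 c3 by presburger
qed

lemma parity_sum: "finite M \<Longrightarrow> even (\<Sum>m\<in>M. (c m::nat)) = even (card {m\<in>M. odd (c m)})"
proof (induction M rule: finite_induct)
  case empty then show ?case by simp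
next
  case (insert x M)
  have "{m\<in>insert x M. odd (c m)} = (if odd (c x) then insert x {m\<in>M. odd (c m)} else {m\<in>M. odd (c m)})"
    by auto
  then show ?case using insert by auto
qed

lemma ev_bmult: assumes "finite p" "finite q" shows "ev (bmult p q) a = (ev p a \<and> ev q a)"
proof -
  define U where "U = (\<lambda>(u::mono, v::mono). u \<union> v)"
  define c where "c m = card {x\<in>p \<times> q. U x = m}" for m
  have bm: "bmult p q = {m. odd (c m)}"
    unfolding bmult_def c_def U_def by (intro Collect_cong arg_cong[where f="\<lambda>x. odd (card x)"]) auto
  define M where "M = {m \<in> U ` (p \<times> q). m \<subseteq> a}"
  have fM: "finite M" using assms unfolding M_def by auto
  have s1: "{m \<in> bmult p q. m \<subseteq> a} = {m\<in>M. odd (c m)}"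
  proof -
    have "odd (c m) \<Longrightarrow> m \<in> U ` (p \<times> q)" for m
      unfolding c_def by (metis (mono_tags, lifting) card.empty empty_Collect_eq even_zero image_eqI mem_Collect_eq)
    then show ?thesis unfolding bm M_def by auto
  qed
  have s2: "card {x\<in>p \<times> q. U x \<subseteq> a} = (\<Sum>m\<in>M. c m)"
  proof -
    have "{x\<in>p \<times> q. U x \<subseteq> a} = (\<Union>m\<in>M. {x\<in>p \<times> q. U x = m})" unfolding M_def by auto
    moreover have "card (\<Union>m\<in>M. {x\<in>p \<times> q. U x = m}) = (\<Sum>m\<in>M. c m)"
      unfolding c_def by (rule card_UN_disjoint) (use fM assms in auto)
    ultimately show ?thesis by simp
  qed
  have s3: "{x\<in>p \<times> q. U x \<subseteq> a} = {u\<in>p. u \<subseteq> a} \<times> {v\<in>q. v \<subseteq> a}" unfolding U_def by auto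
  have s4: "card {x\<in>p \<times> q. U x \<subseteq> a} = card {u\<in>p. u \<subseteq> a} * card {v\<in>q. v \<subseteq> a}"
    unfolding s3 by (rule card_cartesian_product)
  have "odd (card {m\<in>M. odd (c m)}) = odd (card {u\<in>p. u \<subseteq> a} * card {v\<in>q. v \<subseteq> a})"
    using parity_sum[OF fM, of c] s2 s4 by simp
  then show ?thesis unfolding ev_def s1 by simp
qed

lemma bmult_sub: "finite p \<Longrightarrow> finite q \<Longrightarrow> bmult p q \<subseteq> (\<lambda>(u, v). u \<union> v) ` (p \<times> q)"
proof
  fix m assume "finite p" "finite q" "m \<in> bmult p q"
  then have "{(a, b). a \<in> p \<and> b \<in> q \<and> a \<union> b = m} \<noteq> {}" unfolding bmult_def
    by (metis (no_types, lifting) card.empty even_zero mem_Collect_eq)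
  then show "m \<in> (\<lambda>(u, v). u \<union> v) ` (p \<times> q)" by force
qed

lemma fin_badd[simp]: "finite p \<Longrightarrow> finite q \<Longrightarrow> finite (badd p q)"
  unfolding badd_def by auto
lemma fin_bmult[simp]: "finite p \<Longrightarrow> finite q \<Longrightarrow> finite (bmult p q)"
  by (rule finite_subset[OF bmult_sub]) auto
lemma fin_basic[simp]: "finite bone" "finite bzero" "finite (bvar v)" "finite (bconst b)"
  unfolding bone_def bzero_def bvar_def bconst_def by auto

lemma ev_bone[simp]: "ev bone a"
proof -
  have "{m \<in> bone. m \<subseteq> a} = {{}}" unfolding bone_def by auto
  then show ?thesis unfolding ev_def by simp
qed
lemma ev_bzero[simp]: "\<not> ev bzero a" unfolding ev_def bzero_def by simp
lemma ev_bvar[simp]: "ev (bvar v) a = (v \<in> a)"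
proof -
  have "{m \<in> bvar v. m \<subseteq> a} = (if v \<in> a then {{v}} else {})" unfolding bvar_def by auto
  then show ?thesis unfolding ev_def by simp
qed
lemma ev_bconst[simp]: "ev (bconst b) a = b"
  unfolding bconst_def by simp

lemma ev_empty[simp]: "\<not> ev {} a" unfolding ev_def by simp

lemma bring_fin: "p \<in> bring n \<Longrightarrow> finite p" unfolding bring_def by auto

lemma bring_badd[simp]: "p \<in> bring n \<Longrightarrow> q \<in> bring n \<Longrightarrow> badd p q \<in> bring n"
  unfolding bring_def badd_def by auto

lemma bring_bmult[simp]: assumes "p \<in> bring n" "q \<in> bring n" shows "bmult p q \<in> bring n"
proof -
  have f: "finite p" "finite q" using assms bring_fin by auto
  have "(\<lambda>(u, v). u \<union> v) ` (p \<times> q) \<subseteq> mmonos n" using assms unfolding bring_def mmonos_def by auto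
  then show ?thesis using bmult_sub[OF f] f unfolding bring_def by auto
qed

lemma bring_basic[simp]: "bone \<in> bring n" "bzero \<in> bring n" "bconst b \<in> bring n"
  unfolding bring_def bone_def bzero_def bconst_def mmonos_def by auto

lemma bring_bvar[simp]: "v \<in> vars n \<Longrightarrow> bvar v \<in> bring n"
  unfolding bring_def bvar_def mmonos_def by auto

lemma vars_simps[simp]: "X i \<in> vars n \<longleftrightarrow> i \<in> {1..n}" "Y i \<in> vars n \<longleftrightarrow> i \<in> {1..n}"
  "T i \<in> vars n \<longleftrightarrow> i \<in> {1..n}"
  unfolding vars_def by auto

lemma foldr_prod:
  assumes "\<forall>i\<in>set xs. f i \<in> bring n"
  shows "foldr (\<lambda>i acc. bmult (f i) acc) xs bone \<in> bring n \<and>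
         ev (foldr (\<lambda>i acc. bmult (f i) acc) xs bone) a = (\<forall>i\<in>set xs. ev (f i) a)"
  using assms
proof (induction xs)
  case Nil then show ?case by simp
next
  case (Cons x xs)
  have "ev (bmult (f x) (foldr (\<lambda>i acc. bmult (f i) acc) xs bone)) a =
     (ev (f x) a \<and> ev (foldr (\<lambda>i acc. bmult (f i) acc) xs bone) a)"
    by (rule ev_bmult) (use Cons bring_fin in auto)
  then show ?case using Cons by simp
qed

lemma bprod_idx_prop:
  assumes "\<forall>i\<in>{1..n}. f i \<in> bring n"
  shows "bprod_idx n f \<in> bring n \<and> ev (bprod_idx n f) a = (\<forall>i\<in>{1..n}. ev (f i) a)"
proof -
  have "set [1..<Suc n] = {1..n}" by auto
  then show ?thesis unfolding bprod_idx_def using foldr_prod[of "[1..<Suc n]" f n a] assms by simp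
qed

lemma ev_zero_imp_empty:
  assumes "p \<in> bring n" "\<forall>a. a \<subseteq> vars n \<longrightarrow> \<not> ev p a"
  shows "p = {}"
proof (rule ccontr)
  assume "p \<noteq> {}"
  then obtain m where m: "m \<in> p" by auto
  have fp: "finite p" using assms bring_fin by auto
  obtain m0 where m0: "m0 \<in> p" "\<forall>b\<in>p. b \<subseteq> m0 \<longrightarrow> m0 = b"
    using finite_has_minimal2[OF fp m] by auto
  have "{m'\<in>p. m' \<subseteq> m0} = {m0}" using m0 by auto
  then have "ev p m0" unfolding ev_def by simp
  moreover have "m0 \<subseteq> vars n" using m0 assms(1) unfolding bring_def mmonos_def by auto
  ultimately show False using assms(2) by auto
qed

lemma ev_inj:
  assumes "p \<in> bring n" "q \<in> bring n" "\<forall>a. a \<subseteq> vars n \<longrightarrow> ev p a = ev q a"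
  shows "p = q"
proof -
  have "badd p q = {}"
    by (rule ev_zero_imp_empty[of _ n]) (use assms ev_badd bring_fin in auto)
  then show ?thesis unfolding badd_def by auto
qed

lemma fold_prod:
  assumes "finite A" "\<forall>S\<in>A. f S \<in> bring n"
  shows "bprod_set f A \<in> bring n \<and> ev (bprod_set f A) a = (\<forall>S\<in>A. ev (f S) a)"
proof -
  let ?g = "\<lambda>S acc. bmult (f S) acc"
  have inv: "fold_graph ?g bone B y \<Longrightarrow> B \<subseteq> A \<Longrightarrow> y \<in> bring n \<and> (\<forall>a. ev y a = (\<forall>S\<in>B. ev (f S) a))" for B y
  proof (induction rule: fold_graph.induct)
    case emptyI then show ?case by simp
  next
    case (insertI x B y)
    then show ?case using ev_bmult bring_fin assms(2) by auto
  qed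
  obtain y where y: "fold_graph ?g bone A y" using finite_imp_fold_graph[OF assms(1), of ?g bone] by blast
  have uniq: "fold_graph ?g bone A y' \<Longrightarrow> y' = y" for y'
    using inv[OF _ order_refl] y by (intro ev_inj[of _ n]) auto
  have th: "(THE y. fold_graph ?g bone A y) = y"
    by (rule the_equality) (use y uniq in blast)+
  have "bprod_set f A = y"
    unfolding bprod_set_def Finite_Set.fold_def using assms(1) th by simp
  then show ?thesis using inv[OF y order_refl] by auto
qed

lemma rank_inj: "inj_on (rank n) (vars n)"
  unfolding inj_on_def vars_def by auto

lemma vars_cases: "v \<in> vars n \<Longrightarrow> (\<exists>i\<in>{1..n}. v = X i \<or> v = Y i \<or> v = T i)"
  unfolding vars_def by auto

lemma ml_asym:
  assumes "a \<subseteq> vars n" "b \<subseteq> vars n" "mono_less n a b" shows "\<not> mono_less n b a"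
proof
  assume "mono_less n b a"
  then obtain v2 where v2: "v2 \<in> a - b" "\<forall>w\<in>vars n. rank n w < rank n v2 \<longrightarrow> (w \<in> b \<longleftrightarrow> w \<in> a)"
    unfolding mono_less_def by auto
  obtain v1 where v1: "v1 \<in> b - a" "\<forall>w\<in>vars n. rank n w < rank n v1 \<longrightarrow> (w \<in> a \<longleftrightarrow> w \<in> b)"
    using assms(3) unfolding mono_less_def by auto
  have in1: "v1 \<in> vars n" "v2 \<in> vars n" using v1 v2 assms by auto
  consider "rank n v1 < rank n v2" | "rank n v2 < rank n v1" | "rank n v1 = rank n v2" by linarith
  then show False
  proof cases
    case 1 then show ?thesis using v2(2) in1 v1(1) by auto
  next
    case 2 then show ?thesis using v1(2) in1 v2(1) by auto
  next
    case 3 then have "v1 = v2" using rank_inj in1 by (auto dest: inj_onD)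
    then show ?thesis using v1 v2 by auto
  qed
qed

lemma ml_trans:
  assumes "a \<subseteq> vars n" "b \<subseteq> vars n" "c \<subseteq> vars n" "mono_less n a b" "mono_less n b c"
  shows "mono_less n a c"
proof -
  obtain v1 where v1: "v1 \<in> b - a" "\<forall>w\<in>vars n. rank n w < rank n v1 \<longrightarrow> (w \<in> a \<longleftrightarrow> w \<in> b)"
    using assms(4) unfolding mono_less_def by auto
  obtain v2 where v2: "v2 \<in> c - b" "\<forall>w\<in>vars n. rank n w < rank n v2 \<longrightarrow> (w \<in> b \<longleftrightarrow> w \<in> c)"
    using assms(5) unfolding mono_less_def by auto
  have in1: "v1 \<in> vars n" "v2 \<in> vars n" using v1 v2 assms by auto
  consider "rank n v1 < rank n v2" | "rank n v2 < rank n v1" | "rank n v1 = rank n v2" by linarith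
  then show ?thesis
  proof cases
    case 1
    then have "v1 \<in> c - a" using v1 v2 in1 by auto
    moreover have "\<forall>w\<in>vars n. rank n w < rank n v1 \<longrightarrow> (w \<in> a \<longleftrightarrow> w \<in> c)"
      using v1 v2 1 by auto
    ultimately show ?thesis unfolding mono_less_def by blast
  next
    case 2
    then have "v2 \<in> c - a" using v1 v2 in1 by auto
    moreover have "\<forall>w\<in>vars n. rank n w < rank n v2 \<longrightarrow> (w \<in> a \<longleftrightarrow> w \<in> c)"
      using v1 v2 2 by auto
    ultimately show ?thesis unfolding mono_less_def by blast
  next
    case 3 then have "v1 = v2" using rank_inj in1 by (auto dest: inj_onD)
    then show ?thesis using v1 v2 by auto
  qed
qed

lemma ml_total:
  assumes "a \<subseteq> vars n" "b \<subseteq> vars n" "a \<noteq> b"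
  shows "mono_less n a b \<or> mono_less n b a"
proof -
  let ?D = "(a - b) \<union> (b - a)"
  obtain v0 where "v0 \<in> ?D" using assms by auto
  then obtain v where v: "v \<in> ?D" "\<forall>w. w \<in> ?D \<longrightarrow> rank n v \<le> rank n w"
    using ex_has_least_nat[of "\<lambda>x. x \<in> ?D" v0 "rank n"] by blast
  have agree: "\<forall>w\<in>vars n. rank n w < rank n v \<longrightarrow> (w \<in> a \<longleftrightarrow> w \<in> b)"
    using v(2) by force
  show ?thesis
  proof (cases "v \<in> b - a")
    case True then show ?thesis using agree unfolding mono_less_def by blast
  next
    case False then have "v \<in> a - b" using v by auto
    then show ?thesis using agree unfolding mono_less_def by blast
  qed
qed

lemma max_exists:
  assumes "finite p" "p \<noteq> {}" "p \<subseteq> Pow (vars n)"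
  shows "\<exists>m\<in>p. \<forall>m'\<in>p. m' \<noteq> m \<longrightarrow> mono_less n m' m"
  using assms
proof (induction p rule: finite_ne_induct)
  case (singleton x) then show ?case by auto
next
  case (insert x F)
  then obtain m where m: "m \<in> F" "\<forall>m'\<in>F. m' \<noteq> m \<longrightarrow> mono_less n m' m" by auto
  have sub: "x \<subseteq> vars n" "m \<subseteq> vars n" "F \<subseteq> Pow (vars n)" using insert m by auto
  show ?case
  proof (cases "mono_less n x m")
    case True then show ?thesis using m by auto
  next
    case False
    then have xm: "mono_less n m x" using ml_total[OF sub(1,2)] insert m by auto
    have "\<forall>m'\<in>insert x F. m' \<noteq> x \<longrightarrow> mono_less n m' x"
    proof (intro ballI impI)
      fix m' assume "m' \<in> insert x F" "m' \<noteq> x"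
      then have "m' \<in> F" by auto
      show "mono_less n m' x"
      proof (cases "m' = m")
        case True then show ?thesis using xm by simp
      next
        case False then show ?thesis using ml_trans[of m' n m x] m \<open>m' \<in> F\<close> sub xm by auto
      qed
    qed
    then show ?thesis by auto
  qed
qed

lemma lm_in:
  assumes "p \<in> bring n" "p \<noteq> {}" shows "lm n p \<in> p"
proof -
  have sub: "p \<subseteq> Pow (vars n)" "finite p" using assms unfolding bring_def mmonos_def by auto
  obtain m where m: "m \<in> p" "\<forall>m'\<in>p. m' \<noteq> m \<longrightarrow> mono_less n m' m"
    using max_exists[OF sub(2) assms(2) sub(1)] by auto
  have "\<exists>!m. m \<in> p \<and> (\<forall>m'\<in>p. m' \<noteq> m \<longrightarrow> mono_less n m' m)"
  proof (rule ex1I[of _ m])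
    show "m \<in> p \<and> (\<forall>m'\<in>p. m' \<noteq> m \<longrightarrow> mono_less n m' m)" using m by auto
  next
    fix m2 assume m2: "m2 \<in> p \<and> (\<forall>m'\<in>p. m' \<noteq> m2 \<longrightarrow> mono_less n m' m2)"
    show "m2 = m"
    proof (rule ccontr)
      assume "m2 \<noteq> m"
      then have "mono_less n m2 m" "mono_less n m m2" using m m2 by auto
      then show False using ml_asym[of m2 n m] m m2 sub by auto
    qed
  qed
  then show ?thesis unfolding lm_def by (rule the1I2) auto
qed

lemma ideal_bring: "x \<in> ideal_gen n S \<Longrightarrow> S \<subseteq> bring n \<Longrightarrow> x \<in> bring n"
proof (induction x rule: ideal_gen.induct)
  case zero then show ?case by simp
next
  case (gen s) then show ?case by auto
next
  case (add a b) then show ?case by simp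
next
  case (mult r a) then show ?case by simp
qed

lemma ideal_vanish:
  "x \<in> ideal_gen n S \<Longrightarrow> S \<subseteq> bring n \<Longrightarrow> \<forall>s\<in>S. \<not> ev s a \<Longrightarrow> \<not> ev x a"
proof (induction x rule: ideal_gen.induct)
  case zero then show ?case by simp
next
  case (gen s) then show ?case by auto
next
  case (add x y)
  have "finite x" "finite y" using add ideal_bring bring_fin by blast+
  then show ?case using add ev_badd by simp
next
  case (mult r x)
  have "finite x" "finite r" using mult ideal_bring bring_fin by blast+
  then show ?case using mult ev_bmult by simp
qed

lemma or_elem:
  assumes "S \<subseteq> bring n"
  shows "set gs \<subseteq> S \<Longrightarrow> \<exists>h\<in>ideal_gen n S. \<forall>a. ev h a = (\<exists>g\<in>set gs. ev g a)"
proof (induction gs)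
  case Nil show ?case by (intro bexI[of _ bzero]) (auto intro: ideal_gen.zero)
next
  case (Cons g gs)
  then obtain h where h: "h \<in> ideal_gen n S" "\<forall>a. ev h a = (\<exists>g\<in>set gs. ev g a)" by auto
  have hb: "h \<in> bring n" using ideal_bring[OF h(1) assms] .
  have gb: "g \<in> bring n" "g \<in> S" using Cons assms by auto
  let ?h = "badd g (bmult (badd bone g) h)"
  have "?h \<in> ideal_gen n S"
    by (rule ideal_gen.add[OF ideal_gen.gen[OF gb(2)] ideal_gen.mult[OF _ h(1)]]) (use gb in simp)
  moreover have "ev ?h a = (\<exists>g'\<in>set (g # gs). ev g' a)" for a
  proof -
    have f: "finite g" "finite h" using gb hb bring_fin by auto
    then have "ev ?h a = (ev g a \<noteq> ((True \<noteq> ev g a) \<and> ev h a))" using ev_badd ev_bmult by simp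
    then show ?thesis using h(2) by auto
  qed
  ultimately show ?case by blast
qed

lemma nullst:
  assumes "finite S" "S \<subseteq> bring n" "p \<in> bring n"
    "\<forall>a. a \<subseteq> vars n \<longrightarrow> (\<forall>s\<in>S. \<not> ev s a) \<longrightarrow> \<not> ev p a"
  shows "p \<in> ideal_gen n S"
proof -
  obtain gs where gs: "set gs = S" using finite_list[OF assms(1)] by auto
  obtain h where h: "h \<in> ideal_gen n S" "\<forall>a. ev h a = (\<exists>g\<in>S. ev g a)"
    using or_elem[OF assms(2), of gs] gs by auto
  have hb: "h \<in> bring n" using ideal_bring[OF h(1) assms(2)] .
  have q: "bmult p h \<in> ideal_gen n S" by (rule ideal_gen.mult) (use assms h in auto)
  have "p = bmult p h"
  proof (rule ev_inj[of _ n])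
    show "p \<in> bring n" "bmult p h \<in> bring n" using assms hb by auto
    have f: "finite p" "finite h" using assms hb bring_fin by auto
    show "\<forall>a. a \<subseteq> vars n \<longrightarrow> ev p a = ev (bmult p h) a"
      using ev_bmult[OF f] h(2) assms(4) by auto
  qed
  then show ?thesis using q by simp
qed

lemma phi_nth: "i \<in> {1..n} \<Longrightarrow> phi n S ! (i - 1) = (i \<in> S)"
proof -
  assume i: "i \<in> {1..n}"
  have u: "[1..<Suc n] ! (i - 1) = i" using i by (subst nth_upt) auto
  have "phi n S ! (i - 1) = (\<lambda>i. i \<in> S) ([1..<Suc n] ! (i - 1))"
    unfolding phi_def by (rule nth_map) (use i in auto)
  then show ?thesis using u by simp
qed

lemma map_phi: "(map (\<lambda>i. Z i \<in> a) [1..<Suc n] = phi n S) = (\<forall>i\<in>{1..n}. (Z i \<in> a) = (i \<in> S))"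
proof -
  have "set [1..<Suc n] = {1..n}" by auto
  then show ?thesis unfolding phi_def map_eq_conv by simp
qed

lemma xi_prop:
  assumes "\<forall>i\<in>{1..n}. Z i \<in> vars n"
  shows "xi n Z S \<in> bring n \<and> ev (xi n Z S) a = (\<forall>i\<in>{1..n}. (Z i \<in> a) = (i \<in> S))"
proof -
  let ?f = "\<lambda>i. badd (badd bone (bvar (Z i))) (bconst (phi n S ! (i - 1)))"
  have fb: "\<forall>i\<in>{1..n}. ?f i \<in> bring n" using assms by simp
  have fe: "ev (?f i) a = ((Z i \<in> a) = (i \<in> S))" if "i \<in> {1..n}" for i
    using phi_nth[OF that, of S] ev_badd by auto
  show ?thesis unfolding xi_def using bprod_idx_prop[OF fb, of a] fe by auto
qed

lemma xi_fam_prop: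
  assumes "finite A" "\<forall>i\<in>{1..n}. Z i \<in> vars n"
  shows "xi_fam n Z A \<in> bring n \<and>
    ev (xi_fam n Z A) a = (\<forall>S\<in>A. \<not> (\<forall>i\<in>{1..n}. (Z i \<in> a) = (i \<in> S)))"
proof -
  have fb: "\<forall>S\<in>A. badd (xi n Z S) bone \<in> bring n" using xi_prop[OF assms(2)] by simp
  have fe: "ev (badd (xi n Z S) bone) a = (\<not> (\<forall>i\<in>{1..n}. (Z i \<in> a) = (i \<in> S)))" for S
    using xi_prop[OF assms(2), of S a] ev_badd bring_fin by auto
  show ?thesis unfolding xi_fam_def using fold_prod[OF assms(1) fb, of a] fe by auto
qed



lemma factor_ev:
  assumes fx: "finite x" and fy: "finite y" and ft: "finite t"
  shows "ev (badd (bmult (bmult x y) t) (badd (bmult x y) (badd (bmult x t) (badd (bmult y t)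
       (badd x (badd y t)))))) a = (ev x a \<or> ev y a \<or> ev t a)"
proof -
  have fxy: "finite (bmult x y)" "finite (bmult x t)" "finite (bmult y t)" "finite (bmult (bmult x y) t)"
    using assms by simp_all
  have e1: "ev (badd x (badd y t)) a = (ev x a \<noteq> (ev y a \<noteq> ev t a))"
    using assms by (simp add: ev_badd)
  have f1: "finite (badd x (badd y t))" using assms by simp
  have e2: "ev (badd (bmult y t) (badd x (badd y t))) a = ((ev y a \<and> ev t a) \<noteq> ev (badd x (badd y t)) a)"
    using ev_badd[OF fxy(3) f1] ev_bmult[OF fy ft] by simp
  have f2: "finite (badd (bmult y t) (badd x (badd y t)))" using assms by simp
  have e3: "ev (badd (bmult x t) (badd (bmult y t) (badd x (badd y t)))) a = ((ev x a \<and> ev t a) \<noteq> ev (badd (bmult y t) (badd x (badd y t))) a)"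
    using ev_badd[OF fxy(2) f2] ev_bmult[OF fx ft] by simp
  have f3: "finite (badd (bmult x t) (badd (bmult y t) (badd x (badd y t))))" using assms by simp
  have e4: "ev (badd (bmult x y) (badd (bmult x t) (badd (bmult y t) (badd x (badd y t))))) a = ((ev x a \<and> ev y a) \<noteq> ev (badd (bmult x t) (badd (bmult y t) (badd x (badd y t)))) a)"
    using ev_badd[OF fxy(1) f3] ev_bmult[OF fx fy] by simp
  have f4: "finite (badd (bmult x y) (badd (bmult x t) (badd (bmult y t) (badd x (badd y t)))))" using assms by simp
  have e5: "ev (badd (bmult (bmult x y) t) (badd (bmult x y) (badd (bmult x t) (badd (bmult y t) (badd x (badd y t)))))) a
     = ((ev x a \<and> ev y a \<and> ev t a) \<noteq> ev (badd (bmult x y) (badd (bmult x t) (badd (bmult y t) (badd x (badd y t))))) a)"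
    using ev_badd[OF fxy(4) f4] ev_bmult[OF fxy(1) ft] ev_bmult[OF fx fy] by simp
  show ?thesis unfolding e5 e4 e3 e2 e1
    by (cases "ev x a"; cases "ev y a"; cases "ev t a") simp_all
qed

lemma omega_prop:
  "omega n \<in> bring n \<and> ev (omega n) a = (\<forall>i\<in>{1..n}. X i \<in> a \<or> Y i \<in> a \<or> T i \<in> a)"
proof -
  let ?f = "\<lambda>i. let x = bvar (X i); y = bvar (Y i); t = bvar (T i) in
     badd (bmult (bmult x y) t) (badd (bmult x y) (badd (bmult x t) (badd (bmult y t)
       (badd x (badd y t)))))"
  have fb: "\<forall>i\<in>{1..n}. ?f i \<in> bring n" by (simp add: Let_def)
  have fe: "ev (?f i) a = (X i \<in> a \<or> Y i \<in> a \<or> T i \<in> a)" for i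
    unfolding Let_def using factor_ev[of "bvar (X i)" "bvar (Y i)" "bvar (T i)" a] by simp
  show ?thesis unfolding omega_def using bprod_idx_prop[OF fb, of a] fe by auto
qed


theorem mainTheorem5:
  fixes n :: nat and F :: "nat set set" and G :: "bpoly set"
  assumes "fail_prone n F"
    and "groebner_basis n (ideal_I n F) G"
    and "card (SM n (ideal_I n F)) = card (phi n ` F) ^ 3"
  shows "Q3 n F"
proof (rule ccontr)
  assume "\<not> Q3 n F"
  then obtain F1 F2 F3 where F123: "F1 \<in> F" "F2 \<in> F" "F3 \<in> F" "{1..n} \<subseteq> F1 \<union> F2 \<union> F3"
    unfolding Q3_def by blast
  have finF: "finite F" using assms(1) unfolding fail_prone_def
    by (meson finite_Pow_iff finite_atLeastAtMost finite_subset)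
  have vX: "\<forall>i\<in>{1..n}. X i \<in> vars n" and vY: "\<forall>i\<in>{1..n}. Y i \<in> vars n"
    and vT: "\<forall>i\<in>{1..n}. T i \<in> vars n" by auto
  define S where "S = {xi_fam n X F, xi_fam n Y F, xi_fam n T F, omega n}"
  have SI: "ideal_I n F = ideal_gen n S" unfolding S_def ideal_I_def by simp
  have Sb: "S \<subseteq> bring n" unfolding S_def
    using xi_fam_prop[OF finF vX] xi_fam_prop[OF finF vY] xi_fam_prop[OF finF vT] omega_prop by auto
  have Sf: "finite S" unfolding S_def by simp
  have finvars: "finite (vars n)" unfolding vars_def by simp
  define V where "V = {a. a \<subseteq> vars n \<and> (\<forall>s\<in>S. \<not> ev s a)}"
  have finV: "finite V" unfolding V_def using finvars by (simp add: finite_subset[of _ "Pow (vars n)"] subset_iff)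
  define SMs where "SMs = SM n (ideal_I n F)"
  have SMsub: "SMs \<subseteq> Pow (vars n)" unfolding SMs_def SM_def mmonos_def by auto
  have finSM: "finite SMs" using SMsub finvars finite_subset by blast
  \<comment> \<open>standard monomials are independent modulo the vanishing ideal\<close>
  define Phi where "Phi p = {a\<in>V. ev p a}" for p
  have inj: "inj_on Phi (Pow SMs)"
  proof (rule inj_onI)
    fix p1 p2 assume p1: "p1 \<in> Pow SMs" and p2: "p2 \<in> Pow SMs" and eq: "Phi p1 = Phi p2"
    define d where "d = badd p1 p2"
    have f12: "finite p1" "finite p2" using p1 p2 finSM finite_subset by auto
    have dsub: "d \<subseteq> SMs" using p1 p2 unfolding d_def badd_def by auto
    have db: "d \<in> bring n" unfolding bring_def mmonos_def
      using dsub SMsub finSM finite_subset by blast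
    have "\<forall>a. a \<subseteq> vars n \<longrightarrow> (\<forall>s\<in>S. \<not> ev s a) \<longrightarrow> \<not> ev d a"
    proof (intro allI impI)
      fix a assume "a \<subseteq> vars n" "\<forall>s\<in>S. \<not> ev s a"
      then have "a \<in> V" unfolding V_def by auto
      then have "ev p1 a = ev p2 a" using eq unfolding Phi_def by blast
      then show "\<not> ev d a" unfolding d_def using ev_badd[OF f12] by simp
    qed
    then have dI: "d \<in> ideal_I n F" unfolding SI using nullst[OF Sf Sb db] by blast
    have "d = {}"
    proof (rule ccontr)
      assume dne: "d \<noteq> {}"
      have "lm n d \<in> SMs" using lm_in[OF db dne] dsub by auto
      moreover have "{lm n d} \<in> ideal_gen n {{lm n f} | f. f \<in> ideal_I n F \<and> f \<noteq> bzero}"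
        by (rule ideal_gen.gen) (use dI dne in \<open>auto simp: bzero_def\<close>)
      ultimately show False unfolding SMs_def SM_def by auto
    qed
    then show "p1 = p2" unfolding d_def badd_def by auto
  qed
  have "card (Pow SMs) \<le> card (Pow V)"
  proof -
    have "card (Pow SMs) = card (Phi ` Pow SMs)" using card_image[OF inj] by simp
    also have "\<dots> \<le> card (Pow V)"
      by (rule card_mono) (use finV in \<open>auto simp: Phi_def\<close>)
    finally show ?thesis .
  qed
  then have "(2::nat) ^ card SMs \<le> 2 ^ card V" using finSM finV by (simp add: card_Pow)
  then have le1: "card SMs \<le> card V" by simp
  \<comment> \<open>the variety misses the covering triple\<close>
  define key where "key a = (map (\<lambda>i. X i \<in> a) [1..<Suc n], map (\<lambda>i. Y i \<in> a) [1..<Suc n],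
      map (\<lambda>i. T i \<in> a) [1..<Suc n])" for a
  have setu: "set [1..<Suc n] = {1..n}" by auto
  have injk: "inj_on key V"
  proof (rule inj_onI)
    fix a b assume a: "a \<in> V" and b: "b \<in> V" and k: "key a = key b"
    have ab: "a \<subseteq> vars n" "b \<subseteq> vars n" using a b unfolding V_def by auto
    have agr: "\<forall>i\<in>{1..n}. (X i \<in> a \<longleftrightarrow> X i \<in> b) \<and> (Y i \<in> a \<longleftrightarrow> Y i \<in> b) \<and> (T i \<in> a \<longleftrightarrow> T i \<in> b)"
      using k unfolding key_def map_eq_conv setu by auto
    show "a = b"
    proof
      show "a \<subseteq> b"
      proof
        fix v assume "v \<in> a"
        then have "v \<in> vars n" using ab by auto
        from vars_cases[OF this] obtain i where "i \<in> {1..n}" "v = X i \<or> v = Y i \<or> v = T i" by blast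
        then show "v \<in> b" using agr \<open>v \<in> a\<close> by auto
      qed
      show "b \<subseteq> a"
      proof
        fix v assume "v \<in> b"
        then have "v \<in> vars n" using ab by auto
        from vars_cases[OF this] obtain i where "i \<in> {1..n}" "v = X i \<or> v = Y i \<or> v = T i" by blast
        then show "v \<in> a" using agr \<open>v \<in> b\<close> by auto
      qed
    qed
  qed
  define PF where "PF = phi n ` F"
  define t where "t = (phi n F1, phi n F2, phi n F3)"
  have kV: "key ` V \<subseteq> (PF \<times> PF \<times> PF) - {t}"
  proof
    fix k assume "k \<in> key ` V"
    then obtain a where a: "a \<in> V" "k = key a" by auto
    have nx: "\<not> ev (xi_fam n X F) a" "\<not> ev (xi_fam n Y F) a" "\<not> ev (xi_fam n T F) a"
      "\<not> ev (omega n) a" using a unfolding V_def S_def by auto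
    have memZ: "map (\<lambda>i. Z i \<in> a) [1..<Suc n] \<in> PF"
      if nz: "\<not> ev (xi_fam n Z F) a" and zv: "\<forall>i\<in>{1..n}. Z i \<in> vars n" for Z
    proof -
      obtain S0 where "S0 \<in> F" "\<forall>i\<in>{1..n}. (Z i \<in> a) = (i \<in> S0)"
        using xi_fam_prop[OF finF zv, of a] nz by auto
      then show ?thesis unfolding PF_def using map_phi by blast
    qed
    have "k \<in> PF \<times> PF \<times> PF" using a(2) memZ[OF nx(1) vX] memZ[OF nx(2) vY] memZ[OF nx(3) vT]
      unfolding key_def by auto
    moreover have "k \<noteq> t"
    proof
      assume "k = t"
      then have "\<forall>i\<in>{1..n}. (X i \<in> a) = (i \<in> F1)" "\<forall>i\<in>{1..n}. (Y i \<in> a) = (i \<in> F2)"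
        "\<forall>i\<in>{1..n}. (T i \<in> a) = (i \<in> F3)"
      proof -
        have "map (\<lambda>i. X i \<in> a) [1..<Suc n] = phi n F1" "map (\<lambda>i. Y i \<in> a) [1..<Suc n] = phi n F2"
          "map (\<lambda>i. T i \<in> a) [1..<Suc n] = phi n F3"
          using a(2) \<open>k = t\<close> unfolding key_def t_def by simp_all
        then show "\<forall>i\<in>{1..n}. (X i \<in> a) = (i \<in> F1)" "\<forall>i\<in>{1..n}. (Y i \<in> a) = (i \<in> F2)"
          "\<forall>i\<in>{1..n}. (T i \<in> a) = (i \<in> F3)" unfolding map_phi by blast+
      qed
      then have "ev (omega n) a" using omega_prop[of n a] F123(4) by blast
      then show False using nx(4) by simp
    qed
    ultimately show "k \<in> (PF \<times> PF \<times> PF) - {t}" by simp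
  qed
  have finPF: "finite PF" unfolding PF_def using finF by simp
  have tin: "t \<in> PF \<times> PF \<times> PF" unfolding t_def PF_def using F123 by auto
  have "card V = card (key ` V)" using card_image[OF injk] by simp
  also have "\<dots> \<le> card ((PF \<times> PF \<times> PF) - {t})" by (rule card_mono) (use finPF kV in auto)
  also have "\<dots> < card (PF \<times> PF \<times> PF)" by (rule card_Diff1_less) (use finPF tin in auto)
  also have "\<dots> = card PF ^ 3" by (simp add: card_cartesian_product power3_eq_cube)
  finally have "card SMs < card PF ^ 3" using le1 by simp
  then show False using assms(3) unfolding SMs_def PF_def by simp
qed

end
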